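(* Let $G$ be an $n$-node network graph and let $T$ be an HST constructed on top of $G$ by the randomized algorithm of Fakcharoenphol, Rao and Talwar. Let $R$ be a dynamic set of queueing requests issued at the nodes of $G$ (each request at node $v$ viewed as issued at the leaf of $T$ corresponding to $v$), and assume the sequence of requests is independent of the randomness of the HST construction. Then $\mathbb{E}[\mathrm{OPT}_T(R)]\le O(\log n)\cdot \mathrm{OPT}_G(R)$.
   Context: The Fakcharoenphol–Rao–Talwar (FRT) randomized construction maps the nodes of $G$ bijectively to the leaves of an HST $T$ such that for all nodes $x,y$: $d_G(x,y)\le d_T(x,y)$ and $\mathbb{E}[d_T(x,y)]=O(\log n)\cdot d_G(x,y)$. A request is $r=(v,t)$ (node $v$, time $t\ge0$), with a dummy request $r_0=(v_0,0)$ ordered first. For a weighted graph $H$, $\mathrm{OPT}_H(R)=\min_\pi\sum_{i=1}^{|R|-1}\max\{d_H(v_{\pi(i-1)},v_{\pi(i)}),\,t_{\pi(i-1)}-t_{\pi(i)}\}$, minimum over orderings $\pi$ of $R$ with $\pi(0)=0$. *)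

theory Defs
  imports "HOL-Probability.Probability" "HOL-Combinatorics.Permutations"
begin

text \<open>A request is a pair (node, time). A request sequence is a list whose
  0-th entry is the dummy request (v0, 0).\<close>
type_synonym 'a request = "'a \<times> real"

definition valid_requests :: "'a set \<Rightarrow> 'a request list \<Rightarrow> bool" where
  "valid_requests V rs \<longleftrightarrow> rs \<noteq> [] \<and> snd (rs ! 0) = 0 \<and>
     (\<forall>r\<in>set rs. fst r \<in> V \<and> snd r \<ge> 0)"

definition order_cost :: "('a \<Rightarrow> 'a \<Rightarrow> real) \<Rightarrow> 'a request list \<Rightarrow> (nat \<Rightarrow> nat) \<Rightarrow> real" where
  "order_cost d rs \<sigma> = (\<Sum>i\<in>{1..<length rs}.
      max (d (fst (rs ! \<sigma> (i - 1))) (fst (rs ! \<sigma> i)))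
          (snd (rs ! \<sigma> (i - 1)) - snd (rs ! \<sigma> i)))"

definition OPT :: "('a \<Rightarrow> 'a \<Rightarrow> real) \<Rightarrow> 'a request list \<Rightarrow> real" where
  "OPT d rs = Min (order_cost d rs ` {\<sigma>. \<sigma> permutes {..<length rs} \<and> \<sigma> 0 = 0})"

definition metric_on :: "'a set \<Rightarrow> ('a \<Rightarrow> 'a \<Rightarrow> real) \<Rightarrow> bool" where
  "metric_on V d \<longleftrightarrow> (\<forall>x\<in>V. \<forall>y\<in>V. d x y \<ge> 0 \<and> (d x y = 0 \<longleftrightarrow> x = y) \<and> d x y = d y x) \<and>
     (\<forall>x\<in>V. \<forall>y\<in>V. \<forall>z\<in>V. d x z \<le> d x y + d y z)"

text \<open>The FRT guarantees (with constant c) for a random HST, represented by the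
  distribution of the induced leaf metric d_T on the nodes V (leaves of T are
  identified with the nodes of G): domination in every outcome and expected
  stretch at most c * log n.\<close>
definition FRT_guarantee :: "real \<Rightarrow> 'a set \<Rightarrow> ('a \<Rightarrow> 'a \<Rightarrow> real) \<Rightarrow> ('a \<Rightarrow> 'a \<Rightarrow> real) pmf \<Rightarrow> bool" where
  "FRT_guarantee c V dG T \<longleftrightarrow>
     (\<forall>dT\<in>set_pmf T. \<forall>x\<in>V. \<forall>y\<in>V. dG x y \<le> dT x y) \<and>
     (\<forall>x\<in>V. \<forall>y\<in>V. (\<integral>\<^sup>+ dT. ennreal (dT x y) \<partial>measure_pmf T)
                     \<le> ennreal (c * ln (real (card V)) * dG x y))"

end

theory Submission
  imports Defs
begin

lemma sorted_perm:
  fixes rs :: "('a \<times> real) list"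
  assumes ne: "rs \<noteq> []" and nn: "\<forall>r\<in>set rs. snd r \<ge> 0" and z: "snd (rs!0) = 0"
  shows "\<exists>\<sigma>. \<sigma> permutes {..<length rs} \<and> \<sigma> 0 = 0 \<and>
           (\<forall>i\<in>{1..<length rs}. snd (rs!\<sigma>(i-1)) \<le> snd (rs!\<sigma> i))"
proof -
  define n where "n = length rs"
  define f where "f = (\<lambda>i. snd (rs!i))"
  define xs where "xs = sort_key f [1..<n]"
  define ys where "ys = 0 # xs"
  define \<sigma> where "\<sigma> = (\<lambda>i. if i < n then ys!i else i)"
  have n0: "n > 0" using ne n_def by simp
  have lys: "length ys = n" using n0 by (simp add: ys_def xs_def length_sort)
  have dys: "distinct ys" by (simp add: ys_def xs_def distinct_sort)
  have sys: "set ys = {..<n}" using n0 by (auto simp: ys_def xs_def)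
  have "bij_betw ((!) ys) {..<n} {..<n}"
    using bij_betw_nth[OF dys] lys sys by simp
  hence "bij_betw \<sigma> {..<n} {..<n}"
    by (rule bij_betw_cong[THEN iffD1, rotated]) (simp add: \<sigma>_def)
  hence perm: "\<sigma> permutes {..<n}"
    by (rule bij_imp_permutes) (simp add: \<sigma>_def)
  have srt: "sorted (map f xs)" by (simp add: xs_def)
  have lxs: "length xs = n - 1" by (simp add: xs_def length_sort)
  have "snd (rs!\<sigma>(i-1)) \<le> snd (rs!\<sigma> i)" if i: "i \<in> {1..<n}" for i
  proof (cases "i = 1")
    case True
    have "\<sigma> i < n" using perm i by (metis atLeastLessThan_iff lessThan_iff permutes_in_image)
    hence "snd (rs!\<sigma> i) \<ge> 0" using nn n_def by auto
    moreover have "\<sigma> 0 = 0" using n0 by (simp add: \<sigma>_def ys_def)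
    ultimately show ?thesis using True z by simp
  next
    case False
    have e1: "i - 1 = Suc (i - 2)" and e2: "i = Suc (i - 1)" using i False by auto
    have "i - 1 < n" using i by auto
    hence "\<sigma> (i-1) = ys ! (i-1)" by (simp add: \<sigma>_def)
    also have "\<dots> = xs!(i-2)" by (subst e1) (simp add: ys_def)
    finally have s1: "\<sigma> (i-1) = xs!(i-2)" .
    have "\<sigma> i = ys ! i" using i by (simp add: \<sigma>_def)
    also have "\<dots> = xs!(i-1)" by (subst e2) (simp add: ys_def)
    finally have s2: "\<sigma> i = xs!(i-1)" .
    note s1 s2
    moreover have "(map f xs)!(i-2) \<le> (map f xs)!(i-1)"
      using srt i False lxs by (intro sorted_nth_mono) auto
    moreover have "i - 2 < length xs" "i - 1 < length xs" using i False lxs by auto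
    ultimately show ?thesis by (simp add: f_def)
  qed
  moreover have "\<sigma> 0 = 0" using n0 by (simp add: \<sigma>_def ys_def)
  ultimately show ?thesis using perm n_def by blast
qed

lemma perm_set_fin:
  "finite {\<sigma>. \<sigma> permutes {..<length rs} \<and> \<sigma> 0 = (0::nat)} \<and>
   id \<in> {\<sigma>. \<sigma> permutes {..<length rs} \<and> \<sigma> 0 = (0::nat)}"
proof -
  have "finite {\<sigma>. \<sigma> permutes {..<length rs}}" by (rule finite_permutations) simp
  hence "finite {\<sigma>. \<sigma> permutes {..<length rs} \<and> \<sigma> 0 = (0::nat)}"
    by (rule finite_subset[rotated]) auto
  thus ?thesis by (simp add: permutes_id)
qed

lemma OPT_le:
  assumes "\<sigma> permutes {..<length rs}" "\<sigma> 0 = 0"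
  shows "OPT d rs \<le> order_cost d rs \<sigma>"
  unfolding OPT_def using perm_set_fin[of rs] assms by (intro Min_le) auto

lemma OPT_attained:
  "\<exists>\<sigma>. \<sigma> permutes {..<length rs} \<and> \<sigma> 0 = 0 \<and> OPT d rs = order_cost d rs \<sigma>"
proof -
  have "OPT d rs \<in> order_cost d rs ` {\<sigma>. \<sigma> permutes {..<length rs} \<and> \<sigma> 0 = 0}"
  proof -
    let ?S = "{\<sigma>. \<sigma> permutes {..<length rs} \<and> \<sigma> 0 = (0::nat)}"
    have "finite (order_cost d rs ` ?S)" using perm_set_fin[of rs] by blast
    moreover have "order_cost d rs ` ?S \<noteq> {}" using perm_set_fin[of rs] by blast
    ultimately show ?thesis unfolding OPT_def by (rule Min_in)
  qed
  thus ?thesis by auto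
qed

lemma ln2_ge: "ln (2::real) \<ge> 1/2"
proof -
  have "exp (1/2::real) * exp (1/2) = exp 1" by (simp flip: exp_add)
  also have "\<dots> \<le> 3" by (rule exp_le)
  finally have e3: "exp (1/2::real) * exp (1/2) \<le> 3" .
  have "exp (1/2::real) < 2"
  proof (rule ccontr)
    assume "\<not> exp (1/2::real) < 2"
    hence "(2::real) * 2 \<le> exp (1/2) * exp (1/2)" by (intro mult_mono) auto
    thus False using e3 by simp
  qed
  thus ?thesis by (subst ln_ge_iff) auto
qed

theorem lemma1:
  fixes c :: real
  shows "\<exists>C::real. \<forall>(V::'a set) dG (T::('a \<Rightarrow> 'a \<Rightarrow> real) pmf) rs.
           finite V \<and> V \<noteq> {} \<and> metric_on V dG \<and> FRT_guarantee c V dG T \<and> valid_requests V rs \<longrightarrow>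
           (\<integral>\<^sup>+ dT. ennreal (OPT dT rs) \<partial>measure_pmf T)
             \<le> ennreal (C * ln (real (card V)) * OPT dG rs)"
proof (intro exI allI impI)
  fix V :: "'a set" and dG and T :: "('a \<Rightarrow> 'a \<Rightarrow> real) pmf" and rs
  assume H: "finite V \<and> V \<noteq> {} \<and> metric_on V dG \<and> FRT_guarantee c V dG T \<and> valid_requests V rs"
  hence fin: "finite V" and Vne: "V \<noteq> {}" and met: "metric_on V dG"
    and frt: "FRT_guarantee c V dG T" and val: "valid_requests V rs" by auto
  define L where "L = ln (real (card V))"
  define c' where "c' = max c 0"
  have cardpos: "card V \<ge> 1" using fin Vne by (simp add: Suc_le_eq card_gt_0_iff)
  have L0: "L \<ge> 0" using cardpos by (simp add: L_def)
  have rne: "rs \<noteq> []" and z: "snd (rs!0) = 0" and inV: "\<And>r. r \<in> set rs \<Longrightarrow> fst r \<in> V"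
    and tnn: "\<And>r. r \<in> set rs \<Longrightarrow> snd r \<ge> 0" using val by (auto simp: valid_requests_def)
  have dGnn: "\<And>x y. x \<in> V \<Longrightarrow> y \<in> V \<Longrightarrow> dG x y \<ge> 0"
   and dG0: "\<And>x. x \<in> V \<Longrightarrow> dG x x = 0" using met by (auto simp: metric_on_def)
  have dom: "\<And>dT x y. dT \<in> set_pmf T \<Longrightarrow> x \<in> V \<Longrightarrow> y \<in> V \<Longrightarrow> dG x y \<le> dT x y"
   and exb: "\<And>x y. x \<in> V \<Longrightarrow> y \<in> V \<Longrightarrow>
      (\<integral>\<^sup>+ dT. ennreal (dT x y) \<partial>measure_pmf T) \<le> ennreal (c * L * dG x y)"
    using frt by (auto simp: FRT_guarantee_def L_def)
  obtain \<sigma> where perm: "\<sigma> permutes {..<length rs}" and s0: "\<sigma> 0 = 0"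
    and optG: "OPT dG rs = order_cost dG rs \<sigma>" using OPT_attained by blast
  define I where "I = {1..<length rs}"
  define a where "a = (\<lambda>i. fst (rs!\<sigma>(i-1)))"
  define b where "b = (\<lambda>i. fst (rs!\<sigma> i))"
  define D where "D = (\<lambda>i. snd (rs!\<sigma>(i-1)) - snd (rs!\<sigma> i))"
  define M where "M = (\<lambda>i. max (dG (a i) (b i)) (D i))"
  have inrs: "\<And>j. j < length rs \<Longrightarrow> rs!\<sigma> j \<in> set rs"
    using perm by (metis lessThan_iff nth_mem permutes_in_image)
  have aV: "\<And>i. i \<in> I \<Longrightarrow> a i \<in> V" and bV: "\<And>i. i \<in> I \<Longrightarrow> b i \<in> V"
  proof -
    fix i assume i: "i \<in> I"
    hence "i - 1 < length rs" "i < length rs" by (auto simp: I_def)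
    thus "a i \<in> V" "b i \<in> V" unfolding a_def b_def using inV inrs by blast+
  qed
  have Mnn: "\<And>i. i \<in> I \<Longrightarrow> M i \<ge> 0"
  proof -
    fix i assume i: "i \<in> I"
    show "M i \<ge> 0" unfolding M_def using dGnn[OF aV[OF i] bV[OF i]] by (simp add: le_max_iff_disj)
  qed
  have oc: "\<And>d. order_cost d rs \<sigma> = (\<Sum>i\<in>I. max (d (a i) (b i)) (D i))"
    by (simp add: order_cost_def I_def a_def b_def D_def)
  have optG': "OPT dG rs = (\<Sum>i\<in>I. M i)" using optG oc by (simp add: M_def)
  have optGnn: "OPT dG rs \<ge> 0" using optG' Mnn by (simp add: sum_nonneg)
  have step1: "ennreal (OPT dT rs) \<le> (\<Sum>i\<in>I. ennreal (dT (a i) (b i)) + ennreal (M i))"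
    if dT: "dT \<in> set_pmf T" for dT
  proof -
    have dTnn: "\<And>i. i \<in> I \<Longrightarrow> dT (a i) (b i) \<ge> 0"
    proof -
      fix i assume i: "i \<in> I"
      show "dT (a i) (b i) \<ge> 0" using dom[OF dT aV[OF i] bV[OF i]] dGnn[OF aV[OF i] bV[OF i]] by linarith
    qed
    have "OPT dT rs \<le> (\<Sum>i\<in>I. max (dT (a i) (b i)) (D i))"
      using OPT_le[OF perm s0] oc by simp
    also have "\<dots> \<le> (\<Sum>i\<in>I. dT (a i) (b i) + M i)"
    proof (rule sum_mono)
      fix i assume i: "i \<in> I"
      have "0 \<le> dT (a i) (b i)" "0 \<le> M i" "D i \<le> M i" using dTnn[OF i] Mnn[OF i]
        by (auto simp: M_def)
      thus "max (dT (a i) (b i)) (D i) \<le> dT (a i) (b i) + M i" by linarith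
    qed
    finally have "ennreal (OPT dT rs) \<le> ennreal (\<Sum>i\<in>I. dT (a i) (b i) + M i)"
      by (rule ennreal_leI)
    also have "\<dots> = (\<Sum>i\<in>I. ennreal (dT (a i) (b i) + M i))"
      using dTnn Mnn by (subst sum_ennreal) (auto intro: add_nonneg_nonneg)
    also have "\<dots> = (\<Sum>i\<in>I. ennreal (dT (a i) (b i)) + ennreal (M i))"
      using dTnn Mnn by (intro sum.cong refl ennreal_plus) auto
    finally show ?thesis .
  qed
  have "(\<integral>\<^sup>+ dT. ennreal (OPT dT rs) \<partial>measure_pmf T)
      \<le> (\<integral>\<^sup>+ dT. (\<Sum>i\<in>I. ennreal (dT (a i) (b i)) + ennreal (M i)) \<partial>measure_pmf T)"
    by (intro nn_integral_mono_AE AE_pmfI step1)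
  also have "\<dots> = (\<Sum>i\<in>I. \<integral>\<^sup>+ dT. ennreal (dT (a i) (b i)) + ennreal (M i) \<partial>measure_pmf T)"
    by (rule nn_integral_sum) simp
  also have "\<dots> = (\<Sum>i\<in>I. (\<integral>\<^sup>+ dT. ennreal (dT (a i) (b i)) \<partial>measure_pmf T) + ennreal (M i))"
  proof (rule sum.cong[OF refl])
    fix i
    have "(\<integral>\<^sup>+ dT. ennreal (M i) \<partial>measure_pmf T) = ennreal (M i)"
      by (simp add: measure_pmf.emeasure_space_1)
    moreover have "(\<integral>\<^sup>+ dT. ennreal (dT (a i) (b i)) + ennreal (M i) \<partial>measure_pmf T) =
       (\<integral>\<^sup>+ dT. ennreal (dT (a i) (b i)) \<partial>measure_pmf T) + (\<integral>\<^sup>+ dT. ennreal (M i) \<partial>measure_pmf T)"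
      by (rule nn_integral_add) simp_all
    ultimately show "(\<integral>\<^sup>+ dT. ennreal (dT (a i) (b i)) + ennreal (M i) \<partial>measure_pmf T) =
       (\<integral>\<^sup>+ dT. ennreal (dT (a i) (b i)) \<partial>measure_pmf T) + ennreal (M i)" by simp
  qed
  also have "\<dots> \<le> (\<Sum>i\<in>I. ennreal (c' * L * M i) + ennreal (M i))"
  proof (intro sum_mono add_mono order_refl)
    fix i assume i: "i \<in> I"
    have "c * L * dG (a i) (b i) \<le> c' * L * dG (a i) (b i)"
      using dGnn[OF aV[OF i] bV[OF i]] L0 by (intro mult_right_mono) (auto simp: c'_def)
    also have "\<dots> \<le> c' * L * M i"
      using L0 by (intro mult_left_mono) (auto simp: c'_def M_def)
    finally show "(\<integral>\<^sup>+ dT. ennreal (dT (a i) (b i)) \<partial>measure_pmf T) \<le> ennreal (c' * L * M i)"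
      using exb[OF aV[OF i] bV[OF i]] by (meson ennreal_leI order_trans)
  qed
  also have "\<dots> = ennreal ((c' * L + 1) * OPT dG rs)"
  proof -
    have "(\<Sum>i\<in>I. ennreal (c' * L * M i) + ennreal (M i)) = (\<Sum>i\<in>I. ennreal (c' * L * M i + M i))"
      using Mnn L0 by (intro sum.cong refl ennreal_plus[symmetric]) (auto simp: c'_def)
    also have "\<dots> = ennreal (\<Sum>i\<in>I. c' * L * M i + M i)"
      using Mnn L0 by (subst sum_ennreal) (auto simp: c'_def intro!: add_nonneg_nonneg)
    also have "(\<Sum>i\<in>I. c' * L * M i + M i) = (c' * L + 1) * OPT dG rs"
      by (simp add: optG' sum.distrib sum_distrib_left algebra_simps)
    finally show ?thesis .
  qed
  also have "\<dots> \<le> ennreal ((max c 0 + 2) * ln (real (card V)) * OPT dG rs)"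
  proof (cases "card V = 1")
    case True
    then obtain v where Vv: "V = {v}" using card_1_singletonE by blast
    obtain \<tau> where tp: "\<tau> permutes {..<length rs}" and t0: "\<tau> 0 = 0"
      and tm: "\<forall>i\<in>{1..<length rs}. snd (rs!\<tau>(i-1)) \<le> snd (rs!\<tau> i)"
      using sorted_perm[OF rne _ z] tnn by blast
    have "order_cost dG rs \<tau> = 0"
      unfolding order_cost_def
    proof (intro sum.neutral ballI)
      fix i assume i: "i \<in> {1..<length rs}"
      have "rs!\<tau>(i-1) \<in> set rs" "rs!\<tau> i \<in> set rs"
        using tp i by (metis atLeastLessThan_iff lessThan_iff less_imp_diff_less nth_mem permutes_in_image)+
      hence "fst (rs!\<tau>(i-1)) = v" "fst (rs!\<tau> i) = v" using inV Vv by auto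
      thus "max (dG (fst (rs ! \<tau> (i - 1))) (fst (rs ! \<tau> i))) (snd (rs ! \<tau> (i - 1)) - snd (rs ! \<tau> i)) = 0"
        using dG0[of v] Vv tm i by auto
    qed
    hence "OPT dG rs = 0" using OPT_le[OF tp t0, of dG] optGnn by simp
    thus ?thesis by simp
  next
    case False
    hence "card V \<ge> 2" using cardpos by simp
    hence "L \<ge> ln 2" unfolding L_def by (subst ln_le_cancel_iff) auto
    hence L2: "L \<ge> 1/2" using ln2_ge by simp
    have "(c' * L + 1) * OPT dG rs \<le> (c' + 2) * L * OPT dG rs"
      using L2 optGnn by (intro mult_right_mono) (auto simp: algebra_simps)
    thus ?thesis by (simp add: L_def c'_def ennreal_leI)
  qed
  finally show "(\<integral>\<^sup>+ dT. ennreal (OPT dT rs) \<partial>measure_pmf T)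
      \<le> ennreal ((max c 0 + 2) * ln (real (card V)) * OPT dG rs)" .
qed

end
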